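(* Let $f\in\mathbb{R}[z_1,\dots,z_n]$ be homogeneous. Then the hyperbolicity cones of $f$ are exactly the connected components of $\mathcal{I}(f)^{\mathsf c}=\mathbb{R}^n\setminus\mathcal{I}(f)$.
   Context: For $f\in\mathbb{C}[z_1,\dots,z_n]$, $\mathcal{V}(f)\subseteq\mathbb{C}^n$ denotes its complex zero set and the imaginary projection of $f$ is $\mathcal{I}(f)=\{\Im(\mathbf z):\mathbf z\in\mathcal V(f)\}\subseteq\mathbb{R}^n$, where $\Im$ is taken componentwise. A homogeneous polynomial $f$ is hyperbolic in direction $\mathbf e\in\mathbb{R}^n$ if $f(\mathbf e)\neq 0$ and for every $\mathbf x\in\mathbb{R}^n$ the univariate polynomial $t\mapsto f(\mathbf x+t\mathbf e)$ has only real roots. In that case the hyperbolicity cone of $f$ with respect to $\mathbf e$ is $C(\mathbf e)=\{\mathbf x\in\mathbb{R}^n: f(\mathbf x+t\mathbf e)=0\Rightarrow t<0\}$. The hyperbolicity cones of $f$ are the sets $C(\mathbf e)$ for all directions $\mathbf e$ in which $f$ is hyperbolic. *)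

theory Defs
  imports "HOL-Analysis.Analysis" "HOL-Library.Poly_Mapping"
begin

text \<open>Multivariate polynomials in the variables indexed by the finite type 'n with real
  coefficients: finitely supported maps from exponent vectors (finitely supported
  'n => nat) to real coefficients.\<close>
type_synonym 'n rpoly = "('n \<Rightarrow>\<^sub>0 nat) \<Rightarrow>\<^sub>0 real"

definition peval :: "'n::finite rpoly \<Rightarrow> complex^'n \<Rightarrow> complex" where
  "peval f z = (\<Sum>m\<in>Poly_Mapping.keys f.
      complex_of_real (Poly_Mapping.lookup f m) * (\<Prod>i\<in>UNIV. (z $ i) ^ Poly_Mapping.lookup m i))"

definition cvec :: "real^'n \<Rightarrow> complex^'n" where
  "cvec x = (\<chi> i. complex_of_real (x $ i))"

definition homogeneous :: "'n::finite rpoly \<Rightarrow> bool" where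
  "homogeneous f \<longleftrightarrow> (\<exists>d. \<forall>m\<in>Poly_Mapping.keys f. (\<Sum>i\<in>UNIV. Poly_Mapping.lookup m i) = d)"

definition zero_set :: "'n::finite rpoly \<Rightarrow> (complex^'n) set" where
  "zero_set f = {z. peval f z = 0}"

definition imag_proj :: "'n::finite rpoly \<Rightarrow> (real^'n) set" where
  "imag_proj f = (\<lambda>z. \<chi> i. Im (z $ i)) ` zero_set f"

definition hyperbolic :: "'n::finite rpoly \<Rightarrow> real^'n \<Rightarrow> bool" where
  "hyperbolic f e \<longleftrightarrow> homogeneous f \<and> peval f (cvec e) \<noteq> 0 \<and>
     (\<forall>x::real^'n. \<forall>t::complex. peval f (cvec x + t *s cvec e) = 0 \<longrightarrow> Im t = 0)"

definition hyp_cone :: "'n::finite rpoly \<Rightarrow> real^'n \<Rightarrow> (real^'n) set" where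
  "hyp_cone f e = {x. \<forall>t::real. peval f (cvec (x + t *\<^sub>R e)) = 0 \<longrightarrow> t < 0}"

end

theory Submission
  imports Defs "HOL-Computational_Algebra.Fundamental_Theorem_Algebra"
begin

lemma peval_scale:
  assumes hd: "\<forall>m\<in>Poly_Mapping.keys f. (\<Sum>i\<in>UNIV. Poly_Mapping.lookup m i) = d"
  shows "peval f (c *s z) = c ^ d * peval f z"
proof -
  have "peval f (c *s z) = (\<Sum>m\<in>Poly_Mapping.keys f. c ^ d *
      (complex_of_real (Poly_Mapping.lookup f m) * (\<Prod>i\<in>UNIV. (z $ i) ^ Poly_Mapping.lookup m i)))"
    unfolding peval_def
  proof (rule sum.cong[OF refl])
    fix m assume m: "m \<in> Poly_Mapping.keys f"
    have "(\<Prod>i\<in>UNIV. ((c *s z) $ i) ^ Poly_Mapping.lookup m i)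
        = (\<Prod>i\<in>UNIV. c ^ Poly_Mapping.lookup m i * (z $ i) ^ Poly_Mapping.lookup m i)"
      by (simp add: power_mult_distrib)
    also have "\<dots> = c ^ d * (\<Prod>i\<in>UNIV. (z $ i) ^ Poly_Mapping.lookup m i)"
    proof -
      have "c ^ d = (\<Prod>i\<in>UNIV. c ^ Poly_Mapping.lookup m i)"
        using hd m by (metis power_sum)
      then show ?thesis by (simp add: prod.distrib)
    qed
    finally show "complex_of_real (Poly_Mapping.lookup f m) * (\<Prod>i\<in>UNIV. ((c *s z) $ i) ^ Poly_Mapping.lookup m i)
       = c ^ d * (complex_of_real (Poly_Mapping.lookup f m) * (\<Prod>i\<in>UNIV. (z $ i) ^ Poly_Mapping.lookup m i))"
      by simp
  qed
  also have "\<dots> = c ^ d * peval f z"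
    unfolding peval_def by (simp add: sum_distrib_left)
  finally show ?thesis .
qed

lemma peval_cnj: "peval f (\<chi> i. cnj (z $ i)) = cnj (peval f z)"
  unfolding peval_def by (simp add: cnj_sum cnj_prod)

lemma tendsto_peval:
  assumes "(g \<longlongrightarrow> a) F"
  shows "((\<lambda>x. peval f (g x)) \<longlongrightarrow> peval f a) F"
  unfolding peval_def
  by (intro tendsto_sum tendsto_mult tendsto_const tendsto_prod tendsto_power tendsto_vec_nth assms)

lemma continuous_peval: "continuous_on UNIV (peval f)"
  unfolding continuous_on_def by (auto intro: tendsto_peval[OF tendsto_ident_at])

lemma cvec_add: "cvec (x + y) = cvec x + cvec y"
  by (simp add: cvec_def vec_eq_iff)
lemma cvec_scale: "cvec (r *\<^sub>R x) = complex_of_real r *s cvec x"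
  by (simp add: cvec_def vec_eq_iff)

definition ppoly :: "'n::finite rpoly \<Rightarrow> complex^'n \<Rightarrow> complex^'n \<Rightarrow> complex poly" where
  "ppoly f w v = (\<Sum>m\<in>Poly_Mapping.keys f. smult (complex_of_real (Poly_Mapping.lookup f m))
       (\<Prod>i\<in>UNIV. [:w $ i, v $ i:] ^ Poly_Mapping.lookup m i))"

lemma poly_ppoly: "poly (ppoly f w v) t = peval f (w + t *s v)"
  unfolding ppoly_def peval_def by (simp add: poly_sum poly_prod poly_power algebra_simps)

lemma coeff_mult_le:
  fixes p q :: "'a::comm_semiring_1 poly"
  assumes "degree p \<le> a" "degree q \<le> b"
  shows "coeff (p * q) (a + b) = coeff p a * coeff q b"
proof -
  have "coeff (p * q) (a + b) = (\<Sum>i\<le>a+b. coeff p i * coeff q (a + b - i))"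
    by (rule coeff_mult)
  also have "\<dots> = (\<Sum>i\<in>{a}. coeff p i * coeff q (a + b - i))"
  proof (rule sum.mono_neutral_right)
    show "\<forall>i\<in>{..a + b} - {a}. coeff p i * coeff q (a + b - i) = 0"
    proof
      fix i assume i: "i \<in> {..a + b} - {a}"
      show "coeff p i * coeff q (a + b - i) = 0"
      proof (cases "i < a")
        case True
        then have "coeff q (a + b - i) = 0" using assms(2) by (intro coeff_eq_0) auto
        then show ?thesis by simp
      next
        case False
        then have "coeff p i = 0" using assms(1) i by (intro coeff_eq_0) auto
        then show ?thesis by simp
      qed
    qed
  qed auto
  finally show ?thesis by simp
qed

lemma coeff_power_le:
  fixes p :: "'a::comm_semiring_1 poly"
  assumes "degree p \<le> a"
  shows "coeff (p ^ k) (k * a) = coeff p a ^ k"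
proof (induction k)
  case 0
  then show ?case by simp
next
  case (Suc k)
  have "degree (p ^ k) \<le> k * a"
    using degree_power_le[of p k] assms by (metis mult.commute mult_le_mono2 order_trans)
  then have "coeff (p * p ^ k) (a + k * a) = coeff p a * coeff (p ^ k) (k * a)"
    using assms by (intro coeff_mult_le)
  then show ?case using Suc by simp
qed

lemma degree_prod_le_sum:
  fixes g :: "'b \<Rightarrow> 'a::comm_semiring_1 poly"
  assumes "\<forall>i\<in>A. degree (g i) \<le> a i"
  shows "degree (\<Prod>i\<in>A. g i) \<le> (\<Sum>i\<in>A. a i)"
  using degree_prod_sum_le[of A g] sum_mono[of A "\<lambda>i. degree (g i)" a] assms
  by (cases "finite A") auto

lemma coeff_prod_le:
  fixes g :: "'b \<Rightarrow> 'a::comm_semiring_1 poly"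
  assumes "finite A" "\<forall>i\<in>A. degree (g i) \<le> a i"
  shows "coeff (\<Prod>i\<in>A. g i) (\<Sum>i\<in>A. a i) = (\<Prod>i\<in>A. coeff (g i) (a i))"
  using assms
proof (induction A rule: finite_induct)
  case empty
  then show ?case by simp
next
  case (insert x F)
  have "degree (\<Prod>i\<in>F. g i) \<le> (\<Sum>i\<in>F. a i)"
    using insert by (intro degree_prod_le_sum) auto
  then have "coeff (g x * (\<Prod>i\<in>F. g i)) (a x + (\<Sum>i\<in>F. a i)) = coeff (g x) (a x) * coeff (\<Prod>i\<in>F. g i) (\<Sum>i\<in>F. a i)"
    using insert by (intro coeff_mult_le) auto
  then show ?case using insert by simp
qed

lemma ppoly_degree_coeff:
  assumes hd: "\<forall>m\<in>Poly_Mapping.keys f. (\<Sum>i\<in>UNIV. Poly_Mapping.lookup m i) = d"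
  shows "degree (ppoly f w v) \<le> d \<and> coeff (ppoly f w v) d = peval f v"
proof -
  have lin: "degree [:w $ i, v $ i:] \<le> 1" for i by simp
  have trm: "degree (\<Prod>i\<in>UNIV. [:w $ i, v $ i:] ^ Poly_Mapping.lookup m i) \<le> d \<and>
      coeff (\<Prod>i\<in>UNIV. [:w $ i, v $ i:] ^ Poly_Mapping.lookup m i) d = (\<Prod>i\<in>UNIV. (v $ i) ^ Poly_Mapping.lookup m i)"
    if m: "m \<in> Poly_Mapping.keys f" for m
  proof -
    have dpow: "\<forall>i\<in>UNIV. degree ([:w $ i, v $ i:] ^ Poly_Mapping.lookup m i) \<le> Poly_Mapping.lookup m i * 1"
      using lin by (metis degree_power_le mult.commute mult_le_mono2 order_trans)
    have "degree (\<Prod>i\<in>UNIV. [:w $ i, v $ i:] ^ Poly_Mapping.lookup m i) \<le> (\<Sum>i\<in>UNIV. Poly_Mapping.lookup m i * 1)"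
      by (rule degree_prod_le_sum[OF dpow])
    moreover have "coeff (\<Prod>i\<in>UNIV. [:w $ i, v $ i:] ^ Poly_Mapping.lookup m i) (\<Sum>i\<in>UNIV. Poly_Mapping.lookup m i * 1)
        = (\<Prod>i\<in>UNIV. coeff ([:w $ i, v $ i:] ^ Poly_Mapping.lookup m i) (Poly_Mapping.lookup m i * 1))"
      by (rule coeff_prod_le[OF _ dpow]) simp
    moreover have "coeff ([:w $ i, v $ i:] ^ k) (k * 1) = (v $ i) ^ k" for i k
      using coeff_power_le[OF lin, of i k] by simp
    ultimately show ?thesis using hd m by simp
  qed
  have "degree (ppoly f w v) \<le> d"
    unfolding ppoly_def
    by (intro degree_sum_le) (auto intro: order_trans[OF degree_smult_le] dest: trm)
  moreover have "coeff (ppoly f w v) d = peval f v"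
    unfolding ppoly_def peval_def coeff_sum
    by (intro sum.cong refl) (simp add: trm)
  ultimately show ?thesis by simp
qed

lemma peval_factor:
  assumes hd: "\<forall>m\<in>Poly_Mapping.keys f. (\<Sum>i\<in>UNIV. Poly_Mapping.lookup m i) = d"
    and nz: "peval f v \<noteq> 0"
  obtains r :: "nat \<Rightarrow> complex" where "\<And>t. peval f (w + t *s v) = peval f v * (\<Prod>i<d. t - r i)"
proof -
  let ?p = "ppoly f w v"
  have dc: "degree ?p \<le> d" "coeff ?p d = peval f v" using ppoly_degree_coeff[OF hd] by auto
  have "d \<le> degree ?p" using dc nz by (intro le_degree) simp
  with dc have deg: "degree ?p = d" by simp
  then have lc: "lead_coeff ?p = peval f v" using dc by simp
  obtain r where r: "smult (lead_coeff ?p) (\<Prod>i<degree ?p. [:-r i, 1:]) = ?p"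
    by (rule complex_poly_decompose')
  show ?thesis
  proof (rule that[of r])
    fix t
    have "peval f (w + t *s v) = poly ?p t" by (simp add: poly_ppoly)
    also have "\<dots> = poly (smult (lead_coeff ?p) (\<Prod>i<degree ?p. [:-r i, 1:])) t" by (simp add: r)
    also have "\<dots> = peval f v * (\<Prod>i<d. t - r i)" by (simp add: deg dc(2) poly_prod)
    finally show "peval f (w + t *s v) = peval f v * (\<Prod>i<d. t - r i)" .
  qed
qed

lemma norm_vsmult: "norm (c *s (x :: complex^'n)) = norm c * norm x"
  unfolding norm_vec_def by (simp add: norm_mult L2_set_right_distrib)

lemma tendsto_vsmult:
  fixes x :: "'a \<Rightarrow> complex^'n"
  assumes "(c \<longlongrightarrow> c0) F" "(x \<longlongrightarrow> x0) F"
  shows "((\<lambda>p. c p *s x p) \<longlongrightarrow> c0 *s x0) F"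
  by (rule vec_tendstoI) (simp add: tendsto_mult assms tendsto_vec_nth)

lemma root_persist:
  assumes hd: "\<forall>m\<in>Poly_Mapping.keys f. (\<Sum>i\<in>UNIV. Poly_Mapping.lookup m i) = d"
    and w: "(w \<longlongrightarrow> w0) F" and v: "(v \<longlongrightarrow> v0) F"
    and nz: "peval f v0 \<noteq> 0" and root: "peval f (w0 + t0 *s v0) = 0" and e: "\<epsilon> > 0"
  shows "eventually (\<lambda>p. \<exists>t. dist t t0 < \<epsilon> \<and> peval f (w p + t *s v p) = 0) F"
proof -
  define e' where "e' = min \<epsilon> 1"
  have e': "0 < e'" "e' \<le> 1" "e' \<le> \<epsilon>" using e by (auto simp: e'_def)
  define c where "c = norm (peval f v0)"
  have c: "c > 0" using nz by (simp add: c_def)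
  have "((\<lambda>p. norm (peval f (v p))) \<longlongrightarrow> c) F"
    unfolding c_def by (intro tendsto_norm tendsto_peval v)
  then have ev1: "eventually (\<lambda>p. norm (peval f (v p)) > c / 2) F"
    using c by (intro order_tendstoD) auto
  have "((\<lambda>p. norm (peval f (w p + t0 *s v p))) \<longlongrightarrow> norm (peval f (w0 + t0 *s v0))) F"
    by (intro tendsto_norm tendsto_peval tendsto_add w tendsto_vsmult tendsto_const v)
  then have ev2: "eventually (\<lambda>p. norm (peval f (w p + t0 *s v p)) < c / 2 * e' ^ d) F"
    using c e' root by (intro order_tendstoD) auto
  show ?thesis
    using ev1 ev2
  proof eventually_elim
    case (elim p)
    then have nzp: "peval f (v p) \<noteq> 0" using c by auto
    obtain r where r: "\<And>t. peval f (w p + t *s v p) = peval f (v p) * (\<Prod>i<d. t - r i)"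
      using peval_factor[OF hd nzp] by blast
    show ?case
    proof (rule ccontr)
      assume H: "\<not> (\<exists>t. dist t t0 < \<epsilon> \<and> peval f (w p + t *s v p) = 0)"
      have far: "e' \<le> norm (t0 - r i)" if "i < d" for i
      proof (rule ccontr)
        assume "\<not> e' \<le> norm (t0 - r i)"
        then have "dist (r i) t0 < \<epsilon>" using e' by (simp add: dist_norm norm_minus_commute)
        moreover have "peval f (w p + r i *s v p) = 0"
          using that by (simp add: r) blast
        ultimately show False using H by blast
      qed
      have "e' ^ d = (\<Prod>i<d. e')" by simp
      also have "\<dots> \<le> (\<Prod>i<d. norm (t0 - r i))"
        using far e' by (intro prod_mono) auto
      finally have "e' ^ d \<le> norm (\<Prod>i<d. t0 - r i)" by (simp add: prod_norm)
      then have "c / 2 * e' ^ d \<le> norm (peval f (v p)) * norm (\<Prod>i<d. t0 - r i)"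
        using elim c e' by (intro mult_mono) auto
      also have "\<dots> = norm (peval f (w p + t0 *s v p))" by (simp add: r norm_mult)
      finally show False using elim by simp
    qed
  qed
qed

lemma cont_param:
  fixes w v :: "'a::topological_space \<Rightarrow> complex^'n::finite"
  assumes cw: "continuous_on UNIV w" and cv: "continuous_on UNIV v"
  shows "continuous_on UNIV (\<lambda>x::'a \<times> complex. peval f (w (fst x) + snd x *s v (fst x)))"
proof -
  have A: "continuous_on UNIV (\<lambda>x::'a \<times> complex. w (fst x))"
    by (rule continuous_on_compose2[OF cw continuous_on_fst[OF continuous_on_id]]) auto
  have B: "continuous_on UNIV (\<lambda>x::'a \<times> complex. v (fst x))"
    by (rule continuous_on_compose2[OF cv continuous_on_fst[OF continuous_on_id]]) auto
  have C: "continuous_on UNIV (\<lambda>x::'a \<times> complex. snd x)"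
    by (rule continuous_on_snd[OF continuous_on_id])
  show ?thesis
    unfolding continuous_on_def
  proof
    fix x :: "'a \<times> complex"
    show "((\<lambda>x. peval f (w (fst x) + snd x *s v (fst x))) \<longlongrightarrow> peval f (w (fst x) + snd x *s v (fst x))) (at x within UNIV)"
      using A[unfolded continuous_on_def, rule_format, OF UNIV_I, of x]
        B[unfolded continuous_on_def, rule_format, OF UNIV_I, of x]
        C[unfolded continuous_on_def, rule_format, OF UNIV_I, of x]
      by (intro tendsto_peval tendsto_add tendsto_vsmult)
  qed
qed

lemma root_bound:
  fixes w v :: "'a::metric_space \<Rightarrow> complex^'n::finite"
  assumes hd: "\<forall>m\<in>Poly_Mapping.keys f. (\<Sum>i\<in>UNIV. Poly_Mapping.lookup m i) = d"
    and cw: "continuous_on UNIV w" and cv: "continuous_on UNIV v"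
    and nz: "peval f (v p1) \<noteq> 0"
  shows "\<exists>r>0. \<exists>R. \<forall>p t. dist p p1 < r \<longrightarrow> peval f (w p + t *s v p) = 0 \<longrightarrow> norm t \<le> R"
proof -
  have "open {y. peval f y \<noteq> 0}"
    using open_Collect_neq[OF continuous_peval[of f] continuous_on_const[of UNIV 0]] by simp
  then obtain \<delta> where \<delta>: "\<delta> > 0" "ball (v p1) \<delta> \<subseteq> {y. peval f y \<noteq> 0}"
    using nz by (auto simp: open_contains_ball)
  obtain r1 where r1: "r1 > 0" "\<forall>p. dist p p1 < r1 \<longrightarrow> dist (v p) (v p1) < \<delta> / 2"
    using cv \<delta> unfolding continuous_on_iff by (metis UNIV_I half_gt_zero)
  obtain r2 where r2: "r2 > 0" "\<forall>p. dist p p1 < r2 \<longrightarrow> dist (w p) (w p1) < 1"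
    using cw unfolding continuous_on_iff by (metis UNIV_I zero_less_one)
  define M where "M = norm (w p1) + 1"
  define R where "R = 2 * M / \<delta>"
  have M: "M > 0" unfolding M_def by (metis add_nonneg_pos norm_ge_zero zero_less_one)
  have "\<forall>p t. dist p p1 < min r1 r2 \<longrightarrow> peval f (w p + t *s v p) = 0 \<longrightarrow> norm t \<le> R"
  proof (intro allI impI)
    fix p t assume p: "dist p p1 < min r1 r2" and root: "peval f (w p + t *s v p) = 0"
    show "norm t \<le> R"
    proof (rule ccontr)
      assume "\<not> norm t \<le> R"
      then have tR: "norm t > R" by simp
      have R0: "R > 0" using M \<delta> by (simp add: R_def)
      then have t0: "t \<noteq> 0" using tR by auto
      define y where "y = (1 / t) *s w p + v p"
      have "t *s y = w p + t *s v p"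
        using t0 by (simp add: y_def vec_eq_iff field_simps)
      then have "t ^ d * peval f y = 0" using root peval_scale[OF hd, of t y] by simp
      then have fy: "peval f y = 0" using t0 by simp
      have nw: "norm (w p) < M"
        using r2 p norm_triangle_ineq2[of "w p" "w p1"] by (auto simp: M_def dist_norm)
      have "norm ((1 / t) *s w p) = norm (w p) / norm t"
        by (simp add: norm_vsmult norm_divide)
      also have "\<dots> < M / norm t"
        using nw tR R0 by (intro divide_strict_right_mono) auto
      also have "\<dots> < M / R"
        using M R0 tR by (intro divide_strict_left_mono) (auto intro!: mult_pos_pos)
      also have "\<dots> = \<delta> / 2" using M \<delta> by (simp add: R_def)
      finally have n1: "norm ((1 / t) *s w p) < \<delta> / 2" .
      have "dist y (v p1) \<le> norm ((1 / t) *s w p) + dist (v p) (v p1)"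
      proof -
        have "y - v p1 = (1 / t) *s w p + (v p - v p1)" by (simp add: y_def)
        then show ?thesis using norm_triangle_ineq[of "(1 / t) *s w p" "v p - v p1"]
          by (simp add: dist_norm add_diff_eq)
      qed
      also have "\<dots> < \<delta>" using n1 r1 p by auto
      finally have "y \<in> ball (v p1) \<delta>" by (simp add: dist_commute)
      then show False using \<delta> fy by auto
    qed
  qed
  moreover have "0 < min r1 r2" using r1 r2 by simp
  ultimately show ?thesis by blast
qed

lemma noroot_persist:
  fixes w v :: "'a::heine_borel \<Rightarrow> complex^'n::finite"
  assumes hd: "\<forall>m\<in>Poly_Mapping.keys f. (\<Sum>i\<in>UNIV. Poly_Mapping.lookup m i) = d"
    and cw: "continuous_on UNIV w" and cv: "continuous_on UNIV v"
    and nz: "peval f (v p1) \<noteq> 0" and F: "closed F"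
    and no: "\<forall>t\<in>F. peval f (w p1 + t *s v p1) \<noteq> 0"
  shows "\<exists>r>0. \<forall>p. dist p p1 < r \<longrightarrow> (\<forall>t\<in>F. peval f (w p + t *s v p) \<noteq> 0)"
proof -
  obtain r0 R where r0: "r0 > 0" and R: "\<forall>p t. dist p p1 < r0 \<longrightarrow> peval f (w p + t *s v p) = 0 \<longrightarrow> norm t \<le> R"
    using root_bound[OF hd cw cv nz] by blast
  define r where "r = r0 / 2"
  have r: "r > 0" "r < r0" using r0 by (auto simp: r_def)
  define Z where "Z = (cball p1 r \<times> (F \<inter> cball 0 R)) \<inter> {x. peval f (w (fst x) + snd x *s v (fst x)) = 0}"
  have "compact (cball p1 r \<times> (F \<inter> cball 0 R))"
    using F by (intro compact_Times compact_cball closed_Int_compact) auto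
  moreover have "closed {x::'a \<times> complex. peval f (w (fst x) + snd x *s v (fst x)) = 0}"
    by (rule closed_Collect_eq[OF cont_param[OF cw cv] continuous_on_const])
  ultimately have "compact Z" unfolding Z_def by (rule compact_Int_closed)
  then have "compact (fst ` Z)" by (intro compact_continuous_image continuous_on_fst continuous_on_id)
  then have "closed (fst ` Z)" by (rule compact_imp_closed)
  moreover have "p1 \<notin> fst ` Z" using no by (auto simp: Z_def)
  ultimately obtain r' where r': "r' > 0" "ball p1 r' \<subseteq> - fst ` Z"
    by (metis ComplI open_Compl open_contains_ball)
  show ?thesis
  proof (intro exI[of _ "min r r'"] conjI allI impI ballI)
    show "0 < min r r'" using r r' by simp
    fix p t assume p: "dist p p1 < min r r'" and t: "t \<in> F"
    show "peval f (w p + t *s v p) \<noteq> 0"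
    proof
      assume z: "peval f (w p + t *s v p) = 0"
      have "dist p p1 < r0" using p r by auto
      then have "norm t \<le> R" using R z by blast
      then have "(p, t) \<in> Z" using z p t by (auto simp: Z_def dist_commute)
      then have "p \<in> fst ` Z" by force
      moreover have "p \<in> ball p1 r'" using p by (simp add: dist_commute)
      ultimately show False using r' by auto
    qed
  qed
qed


lemma tendsto_cvec: "(g \<longlongrightarrow> a) F \<Longrightarrow> ((\<lambda>p. cvec (g p)) \<longlongrightarrow> cvec a) F"
  unfolding cvec_def by (intro vec_tendstoI) (simp add: tendsto_of_real tendsto_vec_nth)

lemma continuous_cvec: "continuous_on UNIV cvec"
  unfolding continuous_on_def by (auto intro: tendsto_cvec[OF tendsto_ident_at])

lemma cvec_nth [simp]: "cvec x $ i = complex_of_real (x $ i)"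
  by (simp add: cvec_def)

context
  fixes f :: "'n::finite rpoly" and d :: nat
  assumes hd: "\<forall>m\<in>Poly_Mapping.keys f. (\<Sum>i\<in>UNIV. Poly_Mapping.lookup m i) = d"
begin

lemma hom: "homogeneous f" using hd by (auto simp: homogeneous_def)

lemma hyperbolic_iff: "hyperbolic f x \<longleftrightarrow> x \<in> - imag_proj f"
proof
  assume h: "hyperbolic f x"
  show "x \<in> - imag_proj f"
  proof
    assume "x \<in> imag_proj f"
    then obtain z where z: "peval f z = 0" "x = (\<chi> i. Im (z $ i))"
      by (auto simp: imag_proj_def zero_set_def)
    define y where "y = (\<chi> i. Re (z $ i))"
    have "z = cvec y + \<i> *s cvec x"
      by (simp add: vec_eq_iff complex_eq_iff y_def z(2))
    then have "peval f (cvec y + \<i> *s cvec x) = 0" using z by simp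
    then have "Im \<i> = 0" using h unfolding hyperbolic_def by blast
    then show False by simp
  qed
next
  assume x: "x \<in> - imag_proj f"
  have notin: "peval f z \<noteq> 0" if "(\<chi> i. Im (z $ i)) = x" for z
    using x that by (auto simp: imag_proj_def zero_set_def)
  have "peval f (\<i> *s cvec x) \<noteq> 0" by (rule notin) (simp add: vec_eq_iff)
  then have nz: "peval f (cvec x) \<noteq> 0" by (simp add: peval_scale[OF hd])
  have roots: "Im t = 0" if r: "peval f (cvec y + t *s cvec x) = 0" for y t
  proof (rule ccontr)
    assume b: "Im t \<noteq> 0"
    define z where "z = complex_of_real (1 / Im t) *s (cvec y + t *s cvec x)"
    have "peval f z = 0" unfolding z_def peval_scale[OF hd] using r by simp
    moreover have "(\<chi> i. Im (z $ i)) = x" using b by (simp add: z_def vec_eq_iff)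
    ultimately show False using notin by blast
  qed
  show "hyperbolic f x" unfolding hyperbolic_def using hom nz roots by blast
qed

lemma cone_sub_U: "x \<in> hyp_cone f e \<Longrightarrow> peval f (cvec x) \<noteq> 0"
  unfolding hyp_cone_def mem_Collect_eq by (drule spec[of _ "0::real"]) simp

lemma self_in_cone: assumes "hyperbolic f e" shows "e \<in> hyp_cone f e"
  unfolding hyp_cone_def
proof (intro CollectI allI impI)
  fix t :: real assume "peval f (cvec (e + t *\<^sub>R e)) = 0"
  moreover have "cvec (e + t *\<^sub>R e) = complex_of_real (1 + t) *s cvec e"
    by (simp add: vec_eq_iff algebra_simps)
  ultimately have "peval f (complex_of_real (1 + t) *s cvec e) = 0" by metis
  then have "complex_of_real (1 + t) ^ d * peval f (cvec e) = 0"
    by (simp only: peval_scale[OF hd])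
  then have "complex_of_real (1 + t) = 0" using assms by (simp add: hyperbolic_def)
  then have "t = -1" by (metis add_eq_0_iff of_real_eq_0_iff)
  then show "t < 0" by simp
qed

lemma cone_star:
  assumes e: "hyperbolic f e" and x: "x \<in> hyp_cone f e" and s: "0 \<le> s" "s \<le> 1"
  shows "(1 - s) *\<^sub>R e + s *\<^sub>R x \<in> hyp_cone f e"
proof (cases "s = 0")
  case True
  then show ?thesis using self_in_cone[OF e] by simp
next
  case False
  then have s0: "s > 0" using s by simp
  show ?thesis
    unfolding hyp_cone_def
  proof (intro CollectI allI impI)
    fix t :: real assume z: "peval f (cvec ((1 - s) *\<^sub>R e + s *\<^sub>R x + t *\<^sub>R e)) = 0"
    define r where "r = (1 - s + t) / s"
    have "cvec ((1 - s) *\<^sub>R e + s *\<^sub>R x + t *\<^sub>R e) = complex_of_real s *s cvec (x + r *\<^sub>R e)"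
      using s0 by (simp add: vec_eq_iff r_def field_simps)
    then have "peval f (complex_of_real s *s cvec (x + r *\<^sub>R e)) = 0" using z by metis
    then have "complex_of_real s ^ d * peval f (cvec (x + r *\<^sub>R e)) = 0"
      by (simp only: peval_scale[OF hd])
    then have "peval f (cvec (x + r *\<^sub>R e)) = 0" using s0 by simp
    then have "r < 0" using x by (simp add: hyp_cone_def)
    then have "1 - s + t < 0" using s0 by (simp add: r_def divide_less_0_iff)
    then show "t < 0" using s by simp
  qed
qed

lemma cone_connected:
  assumes e: "hyperbolic f e"
  shows "connected (hyp_cone f e)"
proof (rule starlike_imp_connected)
  show "starlike (hyp_cone f e)"
    unfolding starlike_def
  proof (intro bexI[OF _ self_in_cone[OF e]] ballI subsetI)
    fix x y assume x: "x \<in> hyp_cone f e" and y: "y \<in> closed_segment e x"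
    then obtain u where "y = (1 - u) *\<^sub>R e + u *\<^sub>R x" "0 \<le> u" "u \<le> 1"
      by (auto simp: closed_segment_def)
    then show "y \<in> hyp_cone f e" using cone_star[OF e x] by simp
  qed
qed

lemma cvec_lin: "cvec (x + t *\<^sub>R y) = cvec x + complex_of_real t *s cvec y"
  by (simp add: vec_eq_iff)

lemma cone_open:
  assumes e: "hyperbolic f e"
  shows "open (hyp_cone f e)"
proof (rule openI)
  fix x assume x: "x \<in> hyp_cone f e"
  define F where "F = {t::complex. Im t = 0 \<and> 0 \<le> Re t}"
  have clF: "closed F" unfolding F_def
    by (intro closed_Collect_conj closed_Collect_eq closed_Collect_le continuous_on_Im continuous_on_Re
        continuous_on_id continuous_on_const)
  have nz: "peval f (cvec e) \<noteq> 0" using e by (simp add: hyperbolic_def)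
  have no: "\<forall>t\<in>F. peval f (cvec x + t *s cvec e) \<noteq> 0"
  proof
    fix t assume t: "t \<in> F"
    then have "t = complex_of_real (Re t)" by (simp add: F_def complex_eq_iff)
    then have "cvec x + t *s cvec e = cvec (x + Re t *\<^sub>R e)" by (metis cvec_lin)
    moreover have "\<not> Re t < 0" using t by (simp add: F_def)
    ultimately show "peval f (cvec x + t *s cvec e) \<noteq> 0" using x by (auto simp: hyp_cone_def)
  qed
  have "\<exists>r>0. \<forall>p. dist p x < r \<longrightarrow> (\<forall>t\<in>F. peval f (cvec p + t *s cvec e) \<noteq> 0)"
    by (rule noroot_persist[OF hd continuous_cvec continuous_on_const]) (use nz clF no in auto)
  then obtain r where r: "r > 0" "\<forall>p. dist p x < r \<longrightarrow> (\<forall>t\<in>F. peval f (cvec p + t *s cvec e) \<noteq> 0)"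
    by blast
  show "\<exists>\<epsilon>>0. ball x \<epsilon> \<subseteq> hyp_cone f e"
  proof (intro exI[of _ r] conjI subsetI)
    fix p assume "p \<in> ball x r"
    then have p: "dist p x < r" by (simp add: dist_commute)
    show "p \<in> hyp_cone f e"
      unfolding hyp_cone_def
    proof (intro CollectI allI impI)
      fix t :: real assume z: "peval f (cvec (p + t *\<^sub>R e)) = 0"
      show "t < 0"
      proof (rule ccontr)
        assume "\<not> t < 0"
        then have "complex_of_real t \<in> F" by (simp add: F_def)
        then show False using r p z by (auto simp: cvec_lin)
      qed
    qed
  qed (use r in simp)
qed

lemma conn_sub_cone:
  assumes e: "hyperbolic f e" and T: "connected T" "T \<subseteq> {x. peval f (cvec x) \<noteq> 0}" "e \<in> T"
  shows "T \<subseteq> hyp_cone f e"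
proof -
  define A where "A = T \<inter> hyp_cone f e"
  have op: "openin (top_of_set T) A" unfolding A_def using cone_open[OF e] by blast
  have op2: "openin (top_of_set T) (T - A)"
    unfolding openin_euclidean_subtopology_iff
  proof (intro conjI ballI)
    show "T - A \<subseteq> T" by auto
    fix x assume x: "x \<in> T - A"
    then have nzx: "peval f (cvec x) \<noteq> 0" using T by auto
    from x obtain t where t: "peval f (cvec (x + t *\<^sub>R e)) = 0" "\<not> t < 0"
      by (auto simp: A_def hyp_cone_def)
    have "t \<noteq> 0" using t nzx by auto
    then have tpos: "t > 0" using t by simp
    have nz: "peval f (cvec e) \<noteq> 0" using e by (simp add: hyperbolic_def)
    have ev: "eventually (\<lambda>p. \<exists>\<tau>. dist \<tau> (complex_of_real t) < t \<and> peval f (cvec p + \<tau> *s cvec e) = 0) (at x)"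
    proof (rule root_persist[OF hd, where w=cvec and v="\<lambda>_. cvec e"])
      show "(cvec \<longlongrightarrow> cvec x) (at x)" by (rule tendsto_cvec[OF tendsto_ident_at])
      show "peval f (cvec x + complex_of_real t *s cvec e) = 0" using t(1) by (simp add: cvec_lin)
    qed (use nz tpos in auto)
    then obtain \<delta> where \<delta>: "\<delta> > 0"
      "\<forall>p. p \<noteq> x \<and> dist p x < \<delta> \<longrightarrow> (\<exists>\<tau>. dist \<tau> (complex_of_real t) < t \<and> peval f (cvec p + \<tau> *s cvec e) = 0)"
      unfolding eventually_at by auto
    show "\<exists>\<epsilon>>0. \<forall>x'\<in>T. dist x' x < \<epsilon> \<longrightarrow> x' \<in> T - A"
    proof (intro exI[of _ \<delta>] conjI ballI impI)
      fix p assume p: "p \<in> T" "dist p x < \<delta>"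
      show "p \<in> T - A"
      proof (cases "p = x")
        case True
        then show ?thesis using x by simp
      next
        case False
        then obtain \<tau> where \<tau>: "dist \<tau> (complex_of_real t) < t" "peval f (cvec p + \<tau> *s cvec e) = 0"
          using \<delta> p by blast
        have "Im \<tau> = 0" using e \<tau>(2) by (auto simp: hyperbolic_def)
        then have teq: "\<tau> = complex_of_real (Re \<tau>)" by (simp add: complex_eq_iff)
        have "\<bar>Re \<tau> - t\<bar> < t"
          using \<tau>(1) teq by (metis dist_complex_def dist_real_def norm_of_real of_real_diff)
        then have "Re \<tau> > 0" by linarith
        moreover have "peval f (cvec (p + Re \<tau> *\<^sub>R e)) = 0" using \<tau>(2) teq by (metis cvec_lin)
        ultimately have "p \<notin> hyp_cone f e" by (auto simp: hyp_cone_def)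
        then show ?thesis using p by (auto simp: A_def)
      qed
    qed (use \<delta> in simp)
  qed
  have cl: "closedin (top_of_set T) A"
    using op2 unfolding closedin_def by (auto simp: A_def)
  have "A = {} \<or> A = T" using T(1) op cl unfolding connected_clopen by blast
  moreover have "e \<in> A" using T self_in_cone[OF e] by (simp add: A_def)
  ultimately show ?thesis by (auto simp: A_def)
qed

lemma garding_step1:
  assumes e: "hyperbolic f e" and x: "x \<in> hyp_cone f e" and \<alpha>: "\<alpha> > 0"
    and z: "peval f (cvec u + (\<i> * complex_of_real \<alpha>) *s cvec e + \<tau> *s cvec x) = 0"
  shows "Im \<tau> < 0"
proof -
  define W where "W = cvec u + (\<i> * complex_of_real \<alpha>) *s cvec e"
  define V where "V s = cvec ((1 - s) *\<^sub>R e + s *\<^sub>R x)" for s :: real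
  have Vnz: "peval f (V s) \<noteq> 0" if "s \<in> {0..1}" for s
    using that cone_sub_U[OF cone_star[OF e x]] by (simp add: V_def)
  have hyp: "Im t = 0" if "peval f (cvec y + t *s cvec e) = 0" for y t
    using e that by (auto simp: hyperbolic_def)
  have noreal: "peval f (W + \<tau> *s V s) \<noteq> 0" if "Im \<tau> = 0" for \<tau> s
  proof
    assume "peval f (W + \<tau> *s V s) = 0"
    moreover have "W + \<tau> *s V s = cvec (u + Re \<tau> *\<^sub>R ((1 - s) *\<^sub>R e + s *\<^sub>R x)) + (\<i> * complex_of_real \<alpha>) *s cvec e"
      using that by (simp add: W_def V_def vec_eq_iff complex_eq_iff)
    ultimately have "Im (\<i> * complex_of_real \<alpha>) = 0" using hyp by metis
    then show False using \<alpha> by simp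
  qed
  have contV: "continuous_on UNIV V"
    unfolding V_def by (intro continuous_on_compose2[OF continuous_cvec] continuous_intros) auto
  define A where "A = {s \<in> {0..1}. \<forall>\<tau>. 0 \<le> Im \<tau> \<longrightarrow> peval f (W + \<tau> *s V s) \<noteq> 0}"
  have A0: "0 \<in> A"
    unfolding A_def
  proof (intro CollectI conjI allI impI)
    fix \<tau> :: complex assume t: "0 \<le> Im \<tau>"
    show "peval f (W + \<tau> *s V 0) \<noteq> 0"
    proof
      assume "peval f (W + \<tau> *s V 0) = 0"
      moreover have "W + \<tau> *s V 0 = cvec u + (\<tau> + \<i> * complex_of_real \<alpha>) *s cvec e"
        by (simp add: W_def V_def vec_eq_iff algebra_simps)
      ultimately have "Im (\<tau> + \<i> * complex_of_real \<alpha>) = 0" using hyp by metis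
      then show False using t \<alpha> by simp
    qed
  qed simp
  have clF: "closed {\<tau>::complex. 0 \<le> Im \<tau>}"
    by (intro closed_Collect_le continuous_on_Im continuous_on_id continuous_on_const)
  have opA: "openin (top_of_set {0..1}) A"
    unfolding openin_euclidean_subtopology_iff
  proof (intro conjI ballI)
    show "A \<subseteq> {0..1}" by (auto simp: A_def)
    fix s assume s: "s \<in> A"
    have "\<exists>r>0. \<forall>p. dist p s < r \<longrightarrow> (\<forall>t\<in>{\<tau>::complex. 0 \<le> Im \<tau>}. peval f (W + t *s V p) \<noteq> 0)"
      by (rule noroot_persist[OF hd continuous_on_const contV _ clF]) (use s Vnz in \<open>auto simp: A_def\<close>)
    then obtain r where r: "r > 0" "\<forall>p. dist p s < r \<longrightarrow> (\<forall>t. 0 \<le> Im t \<longrightarrow> peval f (W + t *s V p) \<noteq> 0)"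
      by auto
    show "\<exists>\<epsilon>>0. \<forall>x'\<in>{0..1}. dist x' s < \<epsilon> \<longrightarrow> x' \<in> A"
      using r by (auto simp: A_def)
  qed
  have opB: "openin (top_of_set {0..1}) ({0..1} - A)"
    unfolding openin_euclidean_subtopology_iff
  proof (intro conjI ballI)
    show "{0..1} - A \<subseteq> {0..1}" by auto
    fix s assume s: "s \<in> {0..1} - A"
    then obtain \<tau>0 where t0: "0 \<le> Im \<tau>0" "peval f (W + \<tau>0 *s V s) = 0"
      by (auto simp: A_def)
    have "Im \<tau>0 \<noteq> 0" using noreal t0 by blast
    then have pos: "Im \<tau>0 > 0" using t0 by simp
    have ev: "eventually (\<lambda>p. \<exists>\<tau>. dist \<tau> \<tau>0 < Im \<tau>0 \<and> peval f (W + \<tau> *s V p) = 0) (at s)"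
    proof (rule root_persist[OF hd, where w="\<lambda>_. W" and v=V])
      show "(V \<longlongrightarrow> V s) (at s)"
        using contV unfolding continuous_on_def by auto
      show "peval f (V s) \<noteq> 0" using s Vnz by auto
    qed (use t0 pos in auto)
    then obtain \<delta> where \<delta>: "\<delta> > 0"
      "\<forall>p. p \<noteq> s \<and> dist p s < \<delta> \<longrightarrow> (\<exists>\<tau>. dist \<tau> \<tau>0 < Im \<tau>0 \<and> peval f (W + \<tau> *s V p) = 0)"
      unfolding eventually_at by auto
    show "\<exists>\<epsilon>>0. \<forall>x'\<in>{0..1}. dist x' s < \<epsilon> \<longrightarrow> x' \<in> {0..1} - A"
    proof (intro exI[of _ \<delta>] conjI ballI impI)
      fix p assume p: "p \<in> {0..1}" "dist p s < \<delta>"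
      show "p \<in> {0..1} - A"
      proof (cases "p = s")
        case True
        then show ?thesis using s by simp
      next
        case False
        then obtain \<tau> where \<tau>: "dist \<tau> \<tau>0 < Im \<tau>0" "peval f (W + \<tau> *s V p) = 0"
          using \<delta> p by blast
        have "\<bar>Im \<tau> - Im \<tau>0\<bar> \<le> dist \<tau> \<tau>0"
          by (metis abs_Im_le_cmod dist_complex_def minus_complex.sel(2))
        then have "Im \<tau> > 0" using \<tau>(1) by linarith
        then have "\<not> (\<forall>\<tau>. 0 \<le> Im \<tau> \<longrightarrow> peval f (W + \<tau> *s V p) \<noteq> 0)" using \<tau>(2) by force
        then show ?thesis using p by (simp add: A_def)
      qed
    qed (use \<delta> in simp)
  qed
  have clA: "closedin (top_of_set {0..1}) A"
    using opB unfolding closedin_def by (auto simp: A_def)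
  have "A = {} \<or> A = {0..1::real}"
    using connected_Icc[of "0::real" 1] opA clA unfolding connected_clopen by blast
  then have "1 \<in> A" using A0 by auto
  then have "\<forall>\<tau>. 0 \<le> Im \<tau> \<longrightarrow> peval f (W + \<tau> *s cvec x) \<noteq> 0"
    by (simp add: A_def V_def)
  then show ?thesis using z unfolding W_def by (metis not_le)
qed

lemma garding:
  assumes e: "hyperbolic f e" and x: "x \<in> hyp_cone f e"
  shows "hyperbolic f x"
proof -
  have nzx: "peval f (cvec x) \<noteq> 0" using cone_sub_U[OF x] .
  have nopos: "peval f (cvec u + \<tau>0 *s cvec x) \<noteq> 0" if pos: "Im \<tau>0 > 0" for u \<tau>0
  proof
    assume root: "peval f (cvec u + \<tau>0 *s cvec x) = 0"
    have ev: "eventually (\<lambda>\<alpha>. \<exists>\<tau>. dist \<tau> \<tau>0 < Im \<tau>0 \<and>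
        peval f ((cvec u + (\<i> * complex_of_real \<alpha>) *s cvec e) + \<tau> *s cvec x) = 0) (at_right 0)"
    proof (rule root_persist[OF hd, where w="\<lambda>\<alpha>. cvec u + (\<i> * complex_of_real \<alpha>) *s cvec e"
          and v="\<lambda>_. cvec x"])
      have "((\<lambda>\<alpha>. cvec u + (\<i> * complex_of_real \<alpha>) *s cvec e) \<longlongrightarrow>
          cvec u + (\<i> * complex_of_real 0) *s cvec e) (at_right 0)"
        by (intro tendsto_add tendsto_const tendsto_vsmult tendsto_mult tendsto_of_real tendsto_ident_at)
      then show "((\<lambda>\<alpha>. cvec u + (\<i> * complex_of_real \<alpha>) *s cvec e) \<longlongrightarrow> cvec u) (at_right 0)"
        by simp
    qed (use nzx root pos in auto)
    moreover have "eventually (\<lambda>\<alpha>::real. 0 < \<alpha>) (at_right 0)" by (rule eventually_at_right_less)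
    ultimately have "eventually (\<lambda>\<alpha>. 0 < \<alpha> \<and> (\<exists>\<tau>. dist \<tau> \<tau>0 < Im \<tau>0 \<and>
        peval f ((cvec u + (\<i> * complex_of_real \<alpha>) *s cvec e) + \<tau> *s cvec x) = 0)) (at_right 0)"
      by eventually_elim auto
    then obtain \<alpha> \<tau> where a: "0 < \<alpha>" "dist \<tau> \<tau>0 < Im \<tau>0"
        "peval f ((cvec u + (\<i> * complex_of_real \<alpha>) *s cvec e) + \<tau> *s cvec x) = 0"
      using eventually_happens'[OF trivial_limit_at_right_real] by blast
    have "\<bar>Im \<tau> - Im \<tau>0\<bar> \<le> dist \<tau> \<tau>0"
      by (metis abs_Im_le_cmod dist_complex_def minus_complex.sel(2))
    then have "Im \<tau> > 0" using a(2) by linarith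
    moreover have "Im \<tau> < 0" by (rule garding_step1[OF e x a(1) a(3)])
    ultimately show False by simp
  qed
  have roots: "Im t = 0" if r: "peval f (cvec u + t *s cvec x) = 0" for u t
  proof (rule ccontr)
    assume "Im t \<noteq> 0"
    then consider "Im t > 0" | "Im t < 0" by linarith
    then show False
    proof cases
      case 1
      then show False using nopos r by blast
    next
      case 2
      have "(\<chi> i. cnj ((cvec u + t *s cvec x) $ i)) = cvec u + cnj t *s cvec x"
        by (simp add: vec_eq_iff)
      then have "peval f (cvec u + cnj t *s cvec x) = cnj (peval f (cvec u + t *s cvec x))"
        by (metis peval_cnj)
      then have "peval f (cvec u + cnj t *s cvec x) = 0" using r by simp
      moreover have "Im (cnj t) > 0" using 2 by simp
      ultimately show False using nopos by blast
    qed
  qed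
  show ?thesis unfolding hyperbolic_def using hom nzx roots by blast
qed

lemma cone_component:
  assumes e: "hyperbolic f e"
  shows "hyp_cone f e = connected_component_set (- imag_proj f) e"
proof
  have "hyp_cone f e \<subseteq> - imag_proj f"
    using garding[OF e] hyperbolic_iff by blast
  then show "hyp_cone f e \<subseteq> connected_component_set (- imag_proj f) e"
    by (intro connected_component_maximal self_in_cone e cone_connected)
next
  have eS: "e \<in> - imag_proj f" using e hyperbolic_iff by blast
  have sub: "- imag_proj f \<subseteq> {x. peval f (cvec x) \<noteq> 0}"
    using hyperbolic_iff by (auto simp: hyperbolic_def)
  show "connected_component_set (- imag_proj f) e \<subseteq> hyp_cone f e"
  proof (rule conn_sub_cone[OF e])
    show "connected_component_set (- imag_proj f) e \<subseteq> {x. peval f (cvec x) \<noteq> 0}"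
      using connected_component_subset sub by blast
  qed (use eS in auto)
qed

end

theorem theorem1p1:
  fixes f :: "'n::finite rpoly"
  assumes "homogeneous f"
  shows "{hyp_cone f e | e. hyperbolic f e} = components (- imag_proj f)"
proof -
  obtain d where hd: "\<forall>m\<in>Poly_Mapping.keys f. (\<Sum>i\<in>UNIV. Poly_Mapping.lookup m i) = d"
    using assms by (auto simp: homogeneous_def)
  have "{hyp_cone f e | e. hyperbolic f e} = {connected_component_set (- imag_proj f) e | e. e \<in> - imag_proj f}"
    using cone_component[OF hd] hyperbolic_iff[OF hd] by blast
  also have "\<dots> = components (- imag_proj f)"
    unfolding components_def by blast
  finally show ?thesis .
qed

end
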